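(* For integers $1\le p\le m$, the real-analytic function on $\mathbb B^m$ $$\phi_p(w)=\frac{1}{(1-\|w\|^2)^{2p}}\det\big((1-\|w\|^2)\delta_{st}+\overline{w_s}w_t\big)_{1\le s,t\le p}$$ does not lie in the Umehara algebra $\Lambda(\mathbb B^m)$.
   Context: $\mathbb B^m=\{w\in\mathbb C^m:\|w\|^2=\sum|w_j|^2<1\}$. For a complex manifold $X$, the Umehara algebra $\Lambda(X)$ is the associative algebra of real-analytic functions on $X$ consisting of real linear combinations of functions $f\bar g+g\bar f$ with $f,g$ holomorphic on $X$. *)

theory Defs
  imports "HOL-Analysis.Analysis"
begin

text \<open>Points of C^m are vectors of type complex^'m (m = CARD('m)); the norm on
  complex^'m is the Euclidean one, so ball 0 1 is the unit ball B^m.\<close>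

definition holomorphic_several :: "(complex^'m \<Rightarrow> complex) \<Rightarrow> (complex^'m) set \<Rightarrow> bool" where
  "holomorphic_several f S \<longleftrightarrow>
     (\<forall>w\<in>S. \<exists>L. (f has_derivative L) (at w) \<and> (\<forall>c v. L (c *s v) = c * L v))"

definition umehara_algebra :: "(complex^'m) set \<Rightarrow> (complex^'m \<Rightarrow> complex) set" where
  "umehara_algebra X = {h. \<exists>(n::nat) (c::nat \<Rightarrow> real) f g.
       (\<forall>k<n. holomorphic_several (f k) X \<and> holomorphic_several (g k) X) \<and>
       (\<forall>w\<in>X. h w = (\<Sum>k<n. of_real (c k) *
            (f k w * cnj (g k w) + g k w * cnj (f k w))))}"

definition det_on :: "'a set \<Rightarrow> ('a \<Rightarrow> 'a \<Rightarrow> complex) \<Rightarrow> complex" where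
  "det_on P A = (\<Sum>\<pi>\<in>{\<pi>. \<pi> permutes P}. of_int (sign \<pi>) * (\<Prod>i\<in>P. A i (\<pi> i)))"

definition phi :: "'m set \<Rightarrow> complex^'m \<Rightarrow> complex" where
  "phi P w = (let r = 1 - (norm w)\<^sup>2 in
     1 / (complex_of_real r) ^ (2 * card P) *
     det_on P (\<lambda>s t. complex_of_real r * (if s = t then 1 else 0) + cnj (w $ s) * w $ t))"

end

theory Submission
  imports Defs "HOL-Complex_Analysis.Complex_Analysis" "HOL-Computational_Algebra.Formal_Power_Series" "Jordan_Normal_Form.Determinant"
begin

lemma sesq_has_derivative:
  assumes "A holomorphic_on S" "B holomorphic_on S" "open S" "z \<in> S"
  shows "((\<lambda>w. A w * cnj (B w)) has_derivative
           (\<lambda>v. A z * cnj (deriv B z * v) + deriv A z * v * cnj (B z))) (at z)"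
proof -
  have dA: "(A has_derivative (\<lambda>v. deriv A z * v)) (at z)"
    using holomorphic_derivI[OF assms(1,3,4)] by (simp add: has_field_derivative_def)
  have dB: "(B has_derivative (\<lambda>v. deriv B z * v)) (at z)"
    using holomorphic_derivI[OF assms(2,3,4)] by (simp add: has_field_derivative_def)
  show ?thesis using has_derivative_mult[OF dA has_derivative_cnj[OF dB]] by simp
qed

lemma core_step:
  fixes F G :: "'a \<Rightarrow> complex \<Rightarrow> complex" and F' G' :: "'b \<Rightarrow> complex \<Rightarrow> complex"
  assumes S: "open S" and fin: "finite I" "finite J"
    and hol: "\<And>x. x \<in> I \<Longrightarrow> F x holomorphic_on S \<and> G x holomorphic_on S"
    and hol': "\<And>y. y \<in> J \<Longrightarrow> F' y holomorphic_on S \<and> G' y holomorphic_on S"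
  defines "T \<equiv> \<lambda>i j z. (\<Sum>x\<in>I. (deriv^^i) (F x) z * cnj ((deriv^^j) (G x) z))
                      - (\<Sum>y\<in>J. (deriv^^i) (F' y) z * cnj ((deriv^^j) (G' y) z))"
  assumes zero: "\<forall>z\<in>S. T i j z = 0" and z: "z \<in> S"
  shows "T (Suc i) j z = 0 \<and> T i (Suc j) z = 0"
proof -
  have h1: "(deriv^^n) (F x) holomorphic_on S" "(deriv^^n) (G x) holomorphic_on S" if "x \<in> I" for x n
    using hol[OF that] S by (auto intro: holomorphic_higher_deriv)
  have h2: "(deriv^^n) (F' y) holomorphic_on S" "(deriv^^n) (G' y) holomorphic_on S" if "y \<in> J" for y n
    using hol'[OF that] S by (auto intro: holomorphic_higher_deriv)
  define L where "L = (\<lambda>v. (\<Sum>x\<in>I. (deriv^^i) (F x) z * cnj ((deriv^^(Suc j)) (G x) z * v) + (deriv^^(Suc i)) (F x) z * v * cnj ((deriv^^j) (G x) z))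
     - (\<Sum>y\<in>J. (deriv^^i) (F' y) z * cnj ((deriv^^(Suc j)) (G' y) z * v) + (deriv^^(Suc i)) (F' y) z * v * cnj ((deriv^^j) (G' y) z)))"
  have "(T i j has_derivative L) (at z)"
    unfolding T_def L_def
    apply (intro has_derivative_diff has_derivative_sum)
    using sesq_has_derivative[OF h1(1) h1(2) S z] sesq_has_derivative[OF h2(1) h2(2) S z]
    by auto
  moreover have "(T i j has_derivative (\<lambda>v. 0)) (at z)"
    by (rule has_derivative_transform_within_open[OF has_derivative_const S z]) (use zero in auto)
  ultimately have L0: "L = (\<lambda>v. 0)" by (rule has_derivative_unique)
  define X where "X = T (Suc i) j z"
  define Y where "Y = T i (Suc j) z"
  have LXY: "L v = v * X + cnj v * Y" for v
    unfolding L_def X_def Y_def T_def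
    by (simp add: sum.distrib sum_distrib_left sum_subtractf algebra_simps)
  have e1: "X + Y = 0" using LXY[of 1] L0 by simp
  have "\<i> * (X - Y) = 0" using LXY[of \<i>] L0 by (simp add: right_diff_distrib)
  hence "X = Y" by simp
  with e1 have "X = 0 \<and> Y = 0" by simp
  then show ?thesis by (simp add: X_def Y_def)
qed

lemma core:
  fixes F G :: "'a \<Rightarrow> complex \<Rightarrow> complex" and F' G' :: "'b \<Rightarrow> complex \<Rightarrow> complex"
  assumes S: "open S" and fin: "finite I" "finite J"
    and hol: "\<And>x. x \<in> I \<Longrightarrow> F x holomorphic_on S \<and> G x holomorphic_on S"
    and hol': "\<And>y. y \<in> J \<Longrightarrow> F' y holomorphic_on S \<and> G' y holomorphic_on S"
    and eq: "\<forall>z\<in>S. (\<Sum>x\<in>I. F x z * cnj (G x z)) = (\<Sum>y\<in>J. F' y z * cnj (G' y z))"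
    and z: "z \<in> S"
  shows "(\<Sum>x\<in>I. (deriv^^i) (F x) z * cnj ((deriv^^j) (G x) z))
       = (\<Sum>y\<in>J. (deriv^^i) (F' y) z * cnj ((deriv^^j) (G' y) z))"
proof -
  define T where "T \<equiv> \<lambda>i j z. (\<Sum>x\<in>I. (deriv^^i) (F x) z * cnj ((deriv^^j) (G x) z))
                      - (\<Sum>y\<in>J. (deriv^^i) (F' y) z * cnj ((deriv^^j) (G' y) z))"
  have step: "T (Suc i) j z = 0 \<and> T i (Suc j) z = 0" if "\<forall>z\<in>S. T i j z = 0" "z \<in> S" for i j z
    unfolding T_def by (rule core_step[OF S fin]) (use hol hol' that in \<open>auto simp: T_def\<close>)
  have "\<forall>i j. i + j = n \<longrightarrow> (\<forall>z\<in>S. T i j z = 0)" for n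
  proof (induction n)
    case 0
    then show ?case using eq by (simp add: T_def)
  next
    case (Suc n)
    show ?case
    proof (intro allI impI ballI)
      fix i j z assume ij: "i + j = Suc n" and z: "z \<in> S"
      show "T i j z = 0"
      proof (cases i)
        case (Suc i')
        then have "\<forall>z\<in>S. T i' j z = 0" using Suc.IH ij by simp
        then show ?thesis using step[of i' j z] z Suc by blast
      next
        case 0
        then obtain j' where j': "j = Suc j'" using ij by (cases j) auto
        then have "\<forall>z\<in>S. T i j' z = 0" using Suc.IH ij 0 by simp
        then show ?thesis using step[of i j' z] z j' by blast
      qed
    qed
  qed
  then show ?thesis using z unfolding T_def by auto
qed


lemma binom_ident:
  fixes q i :: nat
  assumes q: "q \<ge> 1"
  shows "(\<Sum>a\<le>q. (-1)^a * of_nat (q choose a) *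
           (if a \<le> i then of_nat ((q - 1 + (i - a)) choose (i - a)) else 0) :: complex)
         = (if i = 0 then 1 else 0)"
proof -
  define g where "g a = (-1)^i * ((of_nat q gchoose a) * ((- of_nat q) gchoose (i - a)) :: complex)" for a
  have bq: "(of_nat ((q - 1 + (i - a)) choose (i - a)) :: complex) = (-1)^(i-a) * ((- of_nat q) gchoose (i - a))" for a
  proof -
    have "(of_nat ((q - 1 + (i - a)) choose (i - a)) :: complex) = (of_nat (q - 1 + (i - a)) gchoose (i - a))"
      by (simp add: binomial_gbinomial)
    also have "(of_nat (q - 1 + (i - a)) :: complex) = of_nat q + of_nat (i - a) - 1"
      using q by (simp add: of_nat_diff)
    finally show ?thesis by (simp add: gbinomial_minus)
  qed
  have t: "(-1)^a * of_nat (q choose a) * (if a \<le> i then of_nat ((q - 1 + (i - a)) choose (i - a)) else 0)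
        = (if a \<le> i then g a else (0::complex))" for a
  proof (cases "a \<le> i")
    case True
    have pw: "(-1::complex)^a * (-1)^(i-a) = (-1)^i" using True
      by (metis le_add_diff_inverse power_add)
    have "(-1)^a * of_nat (q choose a) * (if a \<le> i then of_nat ((q - 1 + (i - a)) choose (i - a)) else 0)
        = ((-1)^a * (-1)^(i-a)) * ((of_nat q gchoose a) * ((- of_nat q) gchoose (i - a)) :: complex)"
    proof -
      have "(-1)^a * of_nat (q choose a) * (if a \<le> i then of_nat ((q - 1 + (i - a)) choose (i - a)) else 0)
        = (-1)^a * of_nat (q choose a) * ((-1)^(i-a) * ((- of_nat q) gchoose (i - a)) :: complex)"
        using True by (simp only: bq if_True)
      then show ?thesis by (simp add: binomial_gbinomial mult_ac)
    qed
    then show ?thesis using True pw by (simp add: g_def)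
  qed simp
  have g0: "g a = 0" if "a > q" for a
    using that by (simp add: g_def binomial_gbinomial[symmetric])
  have "(\<Sum>a\<le>q. (-1)^a * of_nat (q choose a) *
           (if a \<le> i then of_nat ((q - 1 + (i - a)) choose (i - a)) else 0) :: complex)
       = (\<Sum>a\<le>q. if a \<le> i then g a else 0)" by (simp add: t)
  also have "\<dots> = (\<Sum>a\<le>q+i. if a \<le> i then g a else 0)"
    by (rule sum.mono_neutral_left) (auto simp: g0)
  also have "\<dots> = (\<Sum>a\<in>{0..i}. g a)"
    by (rule sum.mono_neutral_cong_right) auto
  also have "\<dots> = (-1)^i * ((of_nat q + (- of_nat q)) gchoose i)"
    unfolding g_def by (simp add: sum_distrib_left[symmetric] gbinomial_Vandermonde)
  also have "\<dots> = (if i = 0 then 1 else 0)"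
    by (cases i) (auto simp: gbinomial_0)
  finally show ?thesis .
qed

lemma comb:
  fixes C :: "nat \<Rightarrow> nat \<Rightarrow> complex" and q :: nat
  assumes q: "q \<ge> 1"
  assumes E: "\<And>i j. (\<Sum>a\<le>q. (-1)^a * of_nat (q choose a) *
                (if a \<le> i \<and> a \<le> j then C (i-a) (j-a) else 0)) = (if i = 0 \<and> j = 0 then 1 else 0)"
  shows "C i j = (if i = j then of_nat ((q - 1 + i) choose i) else 0)"
proof (induction i arbitrary: j rule: less_induct)
  case (less i)
  have split: "(\<Sum>a\<le>q. f a) = f 0 + (\<Sum>a\<in>{1..q}. f a)" for f :: "nat \<Rightarrow> complex"
    by (simp add: atMost_atLeast0 sum.atLeast_Suc_atMost)
  have IH: "(if a \<le> i \<and> a \<le> j then C (i-a) (j-a) else 0) =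
            (if a \<le> i \<and> a \<le> j then (if i = j then of_nat ((q - 1 + (i-a)) choose (i-a)) else 0) else 0)"
    if "a \<in> {1..q}" for a
    using that less.IH[of "i-a" "j-a"] by auto
  have Eij: "C i j + (\<Sum>a\<in>{1..q}. (-1)^a * of_nat (q choose a) *
                (if a \<le> i \<and> a \<le> j then (if i = j then of_nat ((q - 1 + (i-a)) choose (i-a)) else 0) else 0))
          = (if i = 0 \<and> j = 0 then 1 else 0)"
  proof -
    have "(\<Sum>a\<in>{1..q}. (-1)^a * of_nat (q choose a) * (if a \<le> i \<and> a \<le> j then C (i-a) (j-a) else 0))
      = (\<Sum>a\<in>{1..q}. (-1)^a * of_nat (q choose a) *
                (if a \<le> i \<and> a \<le> j then (if i = j then of_nat ((q - 1 + (i-a)) choose (i-a)) else 0) else 0))"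
      by (rule sum.cong) (simp_all only: IH)
    moreover have "C i j + (\<Sum>a\<in>{1..q}. (-1)^a * of_nat (q choose a) * (if a \<le> i \<and> a \<le> j then C (i-a) (j-a) else 0))
       = (if i = 0 \<and> j = 0 then 1 else 0)"
      using E[of i j] unfolding split by simp
    ultimately show ?thesis by simp
  qed
  show ?case
  proof (cases "i = j")
    case False
    have "(\<Sum>a\<in>{1..q}. (-1)^a * of_nat (q choose a) *
                (if a \<le> i \<and> a \<le> j then (if i = j then of_nat ((q - 1 + (i-a)) choose (i-a)) else 0) else 0)) = (0::complex)"
      using False by (intro sum.neutral) auto
    then show ?thesis using Eij False by (simp split: if_splits)
  next
    case True
    have B: "(\<Sum>a\<le>q. (-1)^a * of_nat (q choose a) *
           (if a \<le> i then of_nat ((q - 1 + (i - a)) choose (i - a)) else 0) :: complex)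
         = (if i = 0 then 1 else 0)" by (rule binom_ident[OF q])
    have Eii: "C i i + (\<Sum>a\<in>{1..q}. (-1)^a * of_nat (q choose a) *
                (if a \<le> i then of_nat ((q - 1 + (i-a)) choose (i-a)) else 0))
          = (if i = 0 then 1 else (0::complex))"
      using Eij unfolding True by (simp cong: if_cong)
    have B': "of_nat ((q - 1 + i) choose i) + (\<Sum>a\<in>{1..q}. (-1)^a * of_nat (q choose a) *
                (if a \<le> i then of_nat ((q - 1 + (i-a)) choose (i-a)) else 0))
          = (if i = 0 then 1 else (0::complex))"
      using B unfolding split by simp
    have "C i i = of_nat ((q - 1 + i) choose i)" using trans[OF Eii sym[OF B']] by simp
    then show ?thesis using True by simp
  qed
qed
lemma rank_bound:
  fixes \<alpha> \<beta> :: "nat \<Rightarrow> nat \<Rightarrow> complex" and d :: "nat \<Rightarrow> complex"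
  assumes H: "\<forall>k<K. \<forall>l<K. (\<Sum>m<M. \<alpha> m k * cnj (\<beta> m l)) = (if k = l then d k else 0)"
  and D: "\<forall>k<K. d k \<noteq> 0"
  shows "K \<le> M"
proof (rule ccontr)
  assume "\<not> K \<le> M"
  hence MK: "M < K" by simp
  define A where "A = Matrix.mat K K (\<lambda>(k,m). if m < M then \<alpha> m k else 0)"
  define B where "B = Matrix.mat K K (\<lambda>(m,l). if m < M then cnj (\<beta> m l) else 0)"
  define DD where "DD = Matrix.mat K K (\<lambda>(k,l). if k = l then d k else 0)"
  have Ac: "A \<in> carrier_mat K K" and Bc: "B \<in> carrier_mat K K" and Dc: "DD \<in> carrier_mat K K"
    by (auto simp: A_def B_def DD_def)
  have "A * B = DD"
  proof (rule eq_matI)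
    fix i j assume i: "i < dim_row DD" and j: "j < dim_col DD"
    hence ij: "i < K" "j < K" by (auto simp: DD_def)
    have "(A * B) $$ (i,j) = (\<Sum>m\<in>{0..<K}. (if m < M then \<alpha> m i * cnj (\<beta> m j) else 0))"
      using ij by (auto simp: A_def B_def scalar_prod_def intro!: sum.cong)
    also have "\<dots> = (\<Sum>m\<in>{0..<M}. \<alpha> m i * cnj (\<beta> m j))"
      using MK by (intro sum.mono_neutral_cong_right) auto
    also have "\<dots> = DD $$ (i,j)" using H ij by (simp add: DD_def atLeast0LessThan)
    finally show "(A * B) $$ (i,j) = DD $$ (i,j)" .
  qed (auto simp: A_def B_def DD_def)
  have "multrow M 0 B = B"
    by (rule eq_matI) (auto simp: B_def index_mat_multrow)
  hence "Determinant.det B = 0" using det_multrow[OF MK Bc, of 0] by simp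
  hence "Determinant.det DD = 0" using det_mult[OF Ac Bc] \<open>A * B = DD\<close> by simp
  moreover have "Determinant.det DD = (\<Prod>i=0..<K. d i)"
    using det_upper_triangular[OF _ Dc] by (simp add: prod_list_diag_prod DD_def upper_triangular_def)
  moreover have "(\<Prod>i=0..<K. d i) \<noteq> 0" using D by simp
  ultimately show False by simp
qed

lemma norm_axis_c: "norm (axis s (z::complex) :: complex^'m) = norm z"
proof -
  have "norm (axis s z :: complex^'m) = sqrt (\<Sum>i\<in>UNIV. (norm ((axis s z :: complex^'m) $ i))\<^sup>2)"
    by (simp add: norm_vec_def L2_set_def)
  also have "(\<Sum>i\<in>UNIV. (norm ((axis s z :: complex^'m) $ i))\<^sup>2) = (norm z)\<^sup>2"
  proof -
    have "(\<Sum>i\<in>UNIV. (norm ((axis s z :: complex^'m) $ i))\<^sup>2) = (\<Sum>i\<in>UNIV. if i = s then (norm z)\<^sup>2 else 0)"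
      by (rule sum.cong) (auto simp: axis_def)
    then show ?thesis by simp
  qed
  finally show ?thesis by simp
qed

lemma bl_axis: "bounded_linear (axis s :: complex \<Rightarrow> complex^'m)"
proof (rule bounded_linear_intro[where K=1])
  show "axis s (x + y) = (axis s x :: complex^'m) + axis s y" for x y
    by (simp add: axis_def Finite_Cartesian_Product.vec_eq_iff)
  show "axis s (r *\<^sub>R x) = r *\<^sub>R (axis s x :: complex^'m)" for r x
    by (simp add: axis_def Finite_Cartesian_Product.vec_eq_iff)
  show "norm (axis s x :: complex^'m) \<le> norm x * 1" for x
    by (simp add: norm_axis_c)
qed

lemma hol_slice:
  assumes "holomorphic_several f (ball (0::complex^'m) 1)"
  shows "(\<lambda>z. f (axis s z)) holomorphic_on ball 0 1"
  unfolding holomorphic_on_def field_differentiable_def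
proof
  fix z :: complex assume z: "z \<in> ball 0 1"
  hence "axis s z \<in> ball (0::complex^'m) 1" by (simp add: norm_axis_c)
  then obtain L where L: "(f has_derivative L) (at (axis s z))" and lin: "\<forall>c v. L (c *s v) = c * L v"
    using assms unfolding holomorphic_several_def by blast
  have "((\<lambda>z. f (axis s z)) has_derivative (\<lambda>v. L (axis s v))) (at z within ball 0 1)"
    by (rule has_derivative_compose[OF bounded_linear.has_derivative[OF bl_axis has_derivative_ident] L])
  moreover have "(\<lambda>v. L (axis s v)) = (\<lambda>v. L (axis s 1) * v)"
  proof
    fix v
    have "axis s v = v *s (axis s 1 :: complex^'m)" by (simp add: axis_def Finite_Cartesian_Product.vec_eq_iff)
    then show "L (axis s v) = L (axis s 1) * v" using lin by (simp add: mult.commute)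
  qed
  ultimately have "((\<lambda>z. f (axis s z)) has_field_derivative L (axis s 1)) (at z within ball 0 1)"
    by (simp add: has_field_derivative_def)
  then show "\<exists>f'. ((\<lambda>z. f (axis s z)) has_field_derivative f') (at z within ball 0 1)" by blast
qed

lemma det_on_diag:
  assumes "finite P" "\<And>i j. i \<noteq> j \<Longrightarrow> A i j = 0"
  shows "det_on P A = (\<Prod>i\<in>P. A i i)"
proof -
  have "det_on P A = (\<Sum>\<pi>\<in>{id}. of_int (sign \<pi>) * (\<Prod>i\<in>P. A i (\<pi> i)))"
    unfolding det_on_def
  proof (rule sum.mono_neutral_right)
    show "finite {\<pi>. \<pi> permutes P}" using assms(1) by (rule finite_permutations)
    show "{id} \<subseteq> {\<pi>. \<pi> permutes P}" by (simp add: permutes_id)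
    show "\<forall>\<pi>\<in>{\<pi>. \<pi> permutes P} - {id}. of_int (sign \<pi>) * (\<Prod>i\<in>P. A i (\<pi> i)) = 0"
    proof
      fix \<pi> assume "\<pi> \<in> {\<pi>. \<pi> permutes P} - {id}"
      then have p: "\<pi> permutes P" "\<pi> \<noteq> id" by auto
      then obtain x where x: "\<pi> x \<noteq> x" by (metis eq_id_iff)
      then have "x \<in> P" using p(1) by (meson permutes_not_in)
      then have "(\<Prod>i\<in>P. A i (\<pi> i)) = 0" using assms x by (metis prod_zero)
      then show "of_int (sign \<pi>) * (\<Prod>i\<in>P. A i (\<pi> i)) = 0" by simp
    qed
  qed
  then show ?thesis by (simp add: sign_id)
qed

lemma phi_axis:
  fixes P :: "'m::finite set"
  assumes s: "s \<in> P" and z: "norm z < 1"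
  shows "phi P (axis s z) = 1 / (complex_of_real (1 - (norm z)\<^sup>2)) ^ (card P + 1)"
proof -
  define r where "r = 1 - (norm z)\<^sup>2"
  have r0: "r \<noteq> 0" using z unfolding r_def
    by (metis abs_norm_cancel abs_square_less_1 less_irrefl right_minus_eq)
  have cz: "cnj z * z = complex_of_real ((norm z)\<^sup>2)"
    by (metis complex_norm_square mult.commute)
  define M where "M = (\<lambda>u t. complex_of_real r * (if u = t then 1 else 0) + cnj ((axis s z :: complex^'m) $ u) * (axis s z :: complex^'m) $ t)"
  have Md: "M u t = (if u = t then (if u = s then 1 else complex_of_real r) else 0)" for u t
    by (simp add: M_def axis_def cz r_def)
  have "det_on P M = (\<Prod>u\<in>P. if u = s then 1 else complex_of_real r)"
    by (subst det_on_diag) (auto simp: Md)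
  also have "\<dots> = (\<Prod>u\<in>P - {s}. complex_of_real r)"
  proof -
    have "(\<Prod>u\<in>P. if u = s then 1 else complex_of_real r)
       = (if s = s then 1 else complex_of_real r) * (\<Prod>u\<in>P - {s}. if u = s then 1 else complex_of_real r)"
      by (rule prod.remove) (simp_all add: s)
    also have "\<dots> = (\<Prod>u\<in>P - {s}. complex_of_real r)"
      by (auto intro!: prod.cong)
    finally show ?thesis .
  qed
  also have "\<dots> = complex_of_real r ^ (card P - 1)"
    using s by (simp add: card_Diff_singleton)
  finally have D: "det_on P M = complex_of_real r ^ (card P - 1)" .
  have cp: "card P \<ge> 1" using s card_gt_0_iff[of P] by fastforce
  have "phi P (axis s z) = 1 / (complex_of_real r) ^ (2 * card P) * complex_of_real r ^ (card P - 1)"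
    unfolding phi_def Let_def using D by (simp add: norm_axis_c r_def M_def)
  also have "\<dots> = 1 / (complex_of_real r) ^ (card P + 1)"
  proof -
    have e: "2 * card P = (card P + 1) + (card P - 1)" using cp by simp
    have R: "complex_of_real r \<noteq> 0" using r0 by simp
    have "(complex_of_real r) ^ (2 * card P) = (complex_of_real r) ^ (card P + 1) * (complex_of_real r) ^ (card P - 1)"
      by (simp only: e power_add)
    then show ?thesis using R by simp
  qed
  finally show ?thesis by (simp add: r_def)
qed

lemma hd_pow_mult:
  assumes A: "A holomorphic_on ball 0 1"
  shows "(deriv^^i) (\<lambda>z. z^a * A z) 0 = fact i * (if a \<le> i then (deriv^^(i-a)) A 0 / fact (i-a) else 0)"
proof -
  have pw: "(deriv^^t) (\<lambda>w::complex. w^a) 0 = (if t = a then fact a else 0)" for t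
  proof -
    have "(deriv^^t) (\<lambda>w::complex. w^a) 0 = (deriv^^t) (\<lambda>w::complex. (w - 0)^a) 0" by simp
    also have "\<dots> = pochhammer (of_nat (Suc a - t)) t * (0 - 0)^(a - t)" by (rule higher_deriv_power)
    also have "\<dots> = (if t = a then fact a else 0)"
    proof (cases "t = a")
      case True then show ?thesis by (simp add: pochhammer_fact)
    next
      case False
      show ?thesis
      proof (cases "t < a")
        case True then show ?thesis using False by simp
      next
        case F2: False
        then have "Suc a - t = 0" "t > 0" using False by auto
        then show ?thesis using False by (simp add: pochhammer_0_left)
      qed
    qed
    finally show ?thesis .
  qed
  have "(deriv^^i) (\<lambda>z. z^a * A z) 0 = (\<Sum>t = 0..i. of_nat (i choose t) * (deriv^^t) (\<lambda>w. w^a) 0 * (deriv^^(i-t)) A 0)"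
    by (rule higher_deriv_mult[OF _ A]) (auto intro: holomorphic_intros)
  also have "\<dots> = (\<Sum>t = 0..i. if t = a then of_nat (i choose t) * fact a * (deriv^^(i-t)) A 0 else 0)"
    by (rule sum.cong) (auto simp: pw)
  also have "\<dots> = (if a \<le> i then of_nat (i choose a) * fact a * (deriv^^(i-a)) A 0 else 0)"
    by (subst sum.delta) auto
  also have "\<dots> = fact i * (if a \<le> i then (deriv^^(i-a)) A 0 / fact (i-a) else 0)"
    by (auto simp: binomial_fact field_simps)
  finally show ?thesis .
qed

lemma rank_bound_set:
  fixes \<alpha> \<beta> :: "'a \<Rightarrow> nat \<Rightarrow> complex" and d :: "nat \<Rightarrow> complex"
  assumes fin: "finite I"
  and H: "\<forall>k<K. \<forall>l<K. (\<Sum>x\<in>I. \<alpha> x k * cnj (\<beta> x l)) = (if k = l then d k else 0)"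
  and D: "\<forall>k<K. d k \<noteq> 0"
  shows "K \<le> card I"
proof -
  obtain h where h: "bij_betw h {0..<card I} I" using ex_bij_betw_nat_finite[OF fin] by blast
  have "(\<Sum>m<card I. \<alpha> (h m) k * cnj (\<beta> (h m) l)) = (\<Sum>x\<in>I. \<alpha> x k * cnj (\<beta> x l))" for k l
    using sum.reindex_bij_betw[OF h, of "\<lambda>x. \<alpha> x k * cnj (\<beta> x l)"] by (simp add: atLeast0LessThan)
  then show ?thesis using rank_bound[where K=K and M="card I" and \<alpha>="\<lambda>m. \<alpha> (h m)" and \<beta>="\<lambda>m. \<beta> (h m)" and d=d] H D by simp
qed

theorem lemma3p5:
  fixes P :: "'m::finite set" and p :: nat
  assumes "1 \<le> p" and "p \<le> CARD('m)" and "card P = p"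
  shows "phi P \<notin> umehara_algebra (ball (0::complex^'m) 1)"
proof
  assume "phi P \<in> umehara_algebra (ball (0::complex^'m) 1)"
  then obtain n :: nat and c :: "nat \<Rightarrow> real" and f g :: "nat \<Rightarrow> complex^'m \<Rightarrow> complex" where
    hol: "\<forall>k<n. holomorphic_several (f k) (ball (0::complex^'m) 1) \<and> holomorphic_several (g k) (ball 0 1)"
    and eq: "\<forall>w\<in>ball (0::complex^'m) 1. phi P w = (\<Sum>k<n. of_real (c k) *
            (f k w * cnj (g k w) + g k w * cnj (f k w)))"
    unfolding umehara_algebra_def by blast
  have "P \<noteq> {}" using assms by auto
  then obtain s where s: "s \<in> P" by blast
  define q where "q = p + 1"
  have q1: "q \<ge> 1" by (simp add: q_def)
  define I where "I = {..<n} \<times> (UNIV::bool set)"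
  have finI: "finite I" by (simp add: I_def)
  define A where "A = (\<lambda>(k,b) z. complex_of_real (c k) * (if b then f k (axis s z) else g k (axis s z)))"
  define B where "B = (\<lambda>(k,b) z. if b then g k (axis s z) else f k (axis s z))"
  have holAB: "A x holomorphic_on ball 0 1 \<and> B x holomorphic_on ball 0 1" if "x \<in> I" for x
  proof -
    obtain k b where x: "x = (k,b)" by (cases x)
    have k: "k < n" using that x by (simp add: I_def)
    have "(\<lambda>z. f k (axis s z)) holomorphic_on ball 0 1" "(\<lambda>z. g k (axis s z)) holomorphic_on ball 0 1"
      using hol k hol_slice by blast+
    then show ?thesis unfolding x A_def B_def by (cases b) (auto intro: holomorphic_intros)
  qed
  have sumAB: "(\<Sum>x\<in>I. A x z * cnj (B x z)) = 1 / (complex_of_real (1 - (norm z)\<^sup>2)) ^ q"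
    if z: "z \<in> ball 0 1" for z
  proof -
    have "(\<Sum>x\<in>I. A x z * cnj (B x z)) = (\<Sum>k<n. \<Sum>b\<in>UNIV. A (k,b) z * cnj (B (k,b) z))"
      unfolding I_def by (simp add: sum.cartesian_product)
    also have "\<dots> = (\<Sum>k<n. of_real (c k) *
            (f k (axis s z) * cnj (g k (axis s z)) + g k (axis s z) * cnj (f k (axis s z))))"
      by (simp add: UNIV_bool A_def B_def algebra_simps)
    also have "\<dots> = phi P (axis s z)"
      using eq z by (simp add: norm_axis_c)
    also have "\<dots> = 1 / (complex_of_real (1 - (norm z)\<^sup>2)) ^ q"
      using phi_axis[OF s, of z] z assms(3) by (simp add: q_def)
    finally show ?thesis .
  qed
  define Ft where "Ft = (\<lambda>(x,a) z. ((-1)^a * of_nat (q choose a)) * (z^a * A x z))"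
  define Gt where "Gt = (\<lambda>(x,a) z. z^a * B x z)"
  define One where "One = (\<lambda>(u::unit) (z::complex). (1::complex))"
  have key: "\<forall>z\<in>ball 0 1. (\<Sum>xa\<in>I \<times> {..q}. Ft xa z * cnj (Gt xa z)) = (\<Sum>y\<in>{()}. One y z * cnj (One y z))"
  proof
    fix z :: complex assume z: "z \<in> ball 0 1"
    define r where "r = 1 - (norm z)\<^sup>2"
    have r0: "r \<noteq> 0" using z unfolding r_def
      by (metis abs_norm_cancel abs_square_less_1 less_irrefl right_minus_eq mem_ball_0)
    have zz: "z * cnj z = complex_of_real ((norm z)\<^sup>2)" by (rule complex_norm_square[symmetric])
    have bin: "(\<Sum>a\<le>q. (-1)^a * of_nat (q choose a) * (z^a * cnj z ^ a)) = (complex_of_real r) ^ q"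
    proof -
      have "(complex_of_real r) ^ q = (-(z * cnj z) + 1) ^ q" by (simp add: r_def zz)
      also have "\<dots> = (\<Sum>a\<le>q. of_nat (q choose a) * (-(z * cnj z)) ^ a * 1 ^ (q - a))"
        by (rule binomial_ring)
      also have "\<dots> = (\<Sum>a\<le>q. (-1)^a * of_nat (q choose a) * (z^a * cnj z ^ a))"
        by (rule sum.cong) (auto simp: power_minus' power_mult_distrib)
      finally show ?thesis by simp
    qed
    have "(\<Sum>xa\<in>I \<times> {..q}. Ft xa z * cnj (Gt xa z))
        = (\<Sum>x\<in>I. \<Sum>a\<le>q. (A x z * cnj (B x z)) * ((-1)^a * of_nat (q choose a) * (z^a * cnj z ^ a)))"
      by (subst sum.cartesian_product) (auto intro!: sum.cong simp: Ft_def Gt_def mult_ac)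
    also have "\<dots> = (\<Sum>x\<in>I. A x z * cnj (B x z)) * (complex_of_real r) ^ q"
      by (simp only: bin[symmetric] sum_product)
    also have "\<dots> = 1"
    proof -
      have R: "complex_of_real r \<noteq> 0" using r0 by simp
      have "(\<Sum>x\<in>I. A x z * cnj (B x z)) = 1 / (complex_of_real r) ^ q"
        using sumAB[OF z] by (simp only: r_def)
      then show ?thesis using R by simp
    qed
    finally show "(\<Sum>xa\<in>I \<times> {..q}. Ft xa z * cnj (Gt xa z)) = (\<Sum>y\<in>{()}. One y z * cnj (One y z))"
      by (simp add: One_def)
  qed
  have holFG: "Ft xa holomorphic_on ball 0 1 \<and> Gt xa holomorphic_on ball 0 1" if "xa \<in> I \<times> {..q}" for xa
    using that holAB unfolding Ft_def Gt_def by (auto intro!: holomorphic_intros)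
  define \<alpha> where "\<alpha> x i = (deriv^^i) (A x) 0 / fact i" for x i
  define \<beta> where "\<beta> x i = (deriv^^i) (B x) 0 / fact i" for x i
  define C where "C i j = (\<Sum>x\<in>I. \<alpha> x i * cnj (\<beta> x j))" for i j
  have cnj_fact: "cnj (fact m :: complex) = fact m" for m
    by (metis complex_cnj_of_nat of_nat_fact)
  have holPA: "(\<lambda>z. z^a * A x z) holomorphic_on ball 0 1" "(\<lambda>z. z^a * B x z) holomorphic_on ball 0 1"
    if "x \<in> I" for x a
    using holAB[OF that] by (auto intro!: holomorphic_intros)
  have Fd: "(deriv^^i) (Ft (x,a)) 0 = ((-1)^a * of_nat (q choose a)) * (fact i * (if a \<le> i then \<alpha> x (i-a) else 0))"
    if "x \<in> I" for x a i
  proof -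
    have "(deriv^^i) (Ft (x,a)) 0 = (deriv^^i) (\<lambda>z. ((-1)^a * of_nat (q choose a)) * (z^a * A x z)) 0"
      by (simp add: Ft_def)
    also have "\<dots> = ((-1)^a * of_nat (q choose a)) * (deriv^^i) (\<lambda>z. z^a * A x z) 0"
      by (rule higher_deriv_cmult[OF holPA(1)[OF that]]) auto
    finally show ?thesis using hd_pow_mult[OF conjunct1[OF holAB[OF that]], of i a] by (simp add: \<alpha>_def)
  qed
  have Gd: "(deriv^^j) (Gt (x,a)) 0 = fact j * (if a \<le> j then \<beta> x (j-a) else 0)"
    if "x \<in> I" for x a j
    using hd_pow_mult[OF conjunct2[OF holAB[OF that]], of j a] by (simp add: Gt_def \<beta>_def)
  have E: "(\<Sum>a\<le>q. (-1)^a * of_nat (q choose a) *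
                (if a \<le> i \<and> a \<le> j then C (i-a) (j-a) else 0)) = (if i = 0 \<and> j = 0 then 1 else 0)" for i j
  proof -
    have holOne: "One y holomorphic_on ball 0 1" for y by (simp add: One_def)
    have D: "(\<Sum>xa\<in>I \<times> {..q}. (deriv^^i) (Ft xa) 0 * cnj ((deriv^^j) (Gt xa) 0))
          = (\<Sum>y\<in>{()}. (deriv^^i) (One y) 0 * cnj ((deriv^^j) (One y) 0))"
      by (rule core[where S="ball 0 1"]) (use finI holFG holOne key in auto)
    have R: "(\<Sum>y\<in>{()}. (deriv^^i) (One y) 0 * cnj ((deriv^^j) (One y) 0)) = (if i = 0 \<and> j = 0 then 1 else 0)"
      by (simp add: One_def)
    define S where "S = (\<Sum>a\<le>q. (-1)^a * of_nat (q choose a) *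
                (if a \<le> i \<and> a \<le> j then C (i-a) (j-a) else 0))"
    have "(\<Sum>xa\<in>I \<times> {..q}. (deriv^^i) (Ft xa) 0 * cnj ((deriv^^j) (Gt xa) 0))
       = (\<Sum>x\<in>I. \<Sum>a\<le>q. fact i * fact j * ((-1)^a * of_nat (q choose a) *
            (if a \<le> i \<and> a \<le> j then \<alpha> x (i-a) * cnj (\<beta> x (j-a)) else 0)))"
      by (subst sum.cartesian_product) (auto intro!: sum.cong simp: Fd Gd cnj_fact)
    also have "\<dots> = fact i * fact j * S"
      unfolding S_def C_def
      by (subst sum.swap) (auto simp: sum_distrib_left intro!: sum.cong)
    finally have "fact i * fact j * S = (if i = 0 \<and> j = 0 then 1 else 0)" using D R by simp
    then have "S = (if i = 0 \<and> j = 0 then 1 else 0)"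
      by (cases "i = 0 \<and> j = 0") auto
    then show ?thesis by (simp add: S_def)
  qed
  have Cv: "C i j = (if i = j then of_nat ((q - 1 + i) choose i) else 0)" for i j
    by (rule comb[OF q1 E])
  have "card I + 1 \<le> card I"
  proof (rule rank_bound_set[OF finI, where K="card I + 1" and \<alpha>=\<alpha> and \<beta>=\<beta> and d="\<lambda>k. of_nat ((q - 1 + k) choose k)"])
    show "\<forall>k<card I + 1. \<forall>l<card I + 1. (\<Sum>x\<in>I. \<alpha> x k * cnj (\<beta> x l)) =
      (if k = l then of_nat ((q - 1 + k) choose k) else 0)"
      using Cv by (simp add: C_def)
    show "\<forall>k<card I + 1. (of_nat ((q - 1 + k) choose k) :: complex) \<noteq> 0"
      by simp
  qed
  then show False by simp
qed

end
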